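(* Let $X$ be a real reflexive Banach space, $f:X\to\mathbb{R}\cup\{+\infty\}$ a lower semicontinuous proper convex function, $f^{FY}(x,x^{\ast}):=f(x)+f^{\ast}(x^{\ast})$, and let $h\in\mathcal{H}(\partial f)$ satisfy $h\le f^{FY}$. Then for every $\epsilon>0$ and $x\in X$, $\breve{T}_h(\tfrac{\epsilon}{2},x)\subset\partial_\epsilon f(x)$.
   Context: $X^{\ast}$ is the dual of $X$ with pairing $\langle\cdot,\cdot\rangle$; $f^{\ast}(x^{\ast})=\sup_x\{\langle x,x^{\ast}\rangle-f(x)\}$, $\partial f$ is the convex subdifferential, and $\partial_\epsilon f(x)=\{x^{\ast}:f(y)-f(x)\ge\langle y-x,x^{\ast}\rangle-\epsilon\ \forall y\}$ if $f(x)<\infty$, $\emptyset$ otherwise. The dual of $X\times X^{\ast}$ is identified with $X^{\ast}\times X$ via $\langle (x,x^{\ast}),(y^{\ast},y)\rangle=\langle x,y^{\ast}\rangle+\langle y,x^{\ast}\rangle$. For a maximally monotone $T$, $\mathcal{H}(T)$ is the family of lower semicontinuous convex $h:X\times X^{\ast}\to\mathbb{R}\cup\{+\infty\}$ with $h(x,x^{\ast})\ge\langle x,x^{\ast}\rangle$ everywhere and equality whenever $x^{\ast}\in T(x)$. For $\eta\ge0$, $\partial_\eta h(z)$ is the set of $(y^{\ast},y)\in X^{\ast}\times X$ with $h(w,w^{\ast})\ge h(z)+\langle (w,w^{\ast})-z,(y^{\ast},y)\rangle-\eta$ for all $(w,w^{\ast})$ when $h(z)<\infty$, and $\emptyset$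 otherwise; $\breve{T}_h(\epsilon,x):=\{x^{\ast}:(x^{\ast},x)\in\partial_{2\epsilon}h(x,x^{\ast})\}$. *)

theory Defs
  imports "HOL-Analysis.Analysis"
begin

(* The dual X* of a real Banach space X is modelled as the space of bounded
linear functionals ('a \<Rightarrow>\<^sub>L real); the pairing is blinfun_apply.
Extended-real valued functions X \<rightarrow> \<real> \<union> {+\<infinity>} are modelled as maps into ereal
that never take the value -\<infinity>. *)

definition reflexive_space :: "'a::banach itself \<Rightarrow> bool" where
  "reflexive_space _ \<longleftrightarrow>
     (\<forall>\<phi> :: ('a \<Rightarrow>\<^sub>L real) \<Rightarrow>\<^sub>L real. \<exists>x::'a. \<forall>g. blinfun_apply \<phi> g = blinfun_apply g x)"

definition lsc_fun :: "('b::topological_space \<Rightarrow> ereal) \<Rightarrow> bool" where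
  "lsc_fun f \<longleftrightarrow> (\<forall>c::real. closed {x. f x \<le> ereal c})"

definition convex_fun :: "('b::real_vector \<Rightarrow> ereal) \<Rightarrow> bool" where
  "convex_fun f \<longleftrightarrow> (\<forall>x y t. 0 < t \<and> t < 1 \<longrightarrow>
      f (t *\<^sub>R x + (1 - t) *\<^sub>R y) \<le> ereal t * f x + ereal (1 - t) * f y)"

definition no_minf :: "('b \<Rightarrow> ereal) \<Rightarrow> bool" where
  "no_minf f \<longleftrightarrow> (\<forall>x. f x \<noteq> -\<infinity>)"

definition proper_fun :: "('b \<Rightarrow> ereal) \<Rightarrow> bool" where
  "proper_fun f \<longleftrightarrow> no_minf f \<and> (\<exists>x. f x < \<infinity>)"

definition conj_fun :: "('a::real_normed_vector \<Rightarrow> ereal) \<Rightarrow> ('a \<Rightarrow>\<^sub>L real) \<Rightarrow> ereal" where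
  "conj_fun f xs = (SUP x. ereal (blinfun_apply xs x) - f x)"

definition FY :: "('a::real_normed_vector \<Rightarrow> ereal) \<Rightarrow> 'a \<times> ('a \<Rightarrow>\<^sub>L real) \<Rightarrow> ereal" where
  "FY f z = f (fst z) + conj_fun f (snd z)"

definition eps_subdiff :: "real \<Rightarrow> ('a::real_normed_vector \<Rightarrow> ereal) \<Rightarrow> 'a \<Rightarrow> ('a \<Rightarrow>\<^sub>L real) set" where
  "eps_subdiff \<epsilon> f x = (if f x < \<infinity> then
     {xs. \<forall>y. f y - f x \<ge> ereal (blinfun_apply xs (y - x)) - ereal \<epsilon>} else {})"

definition subdiff :: "('a::real_normed_vector \<Rightarrow> ereal) \<Rightarrow> 'a \<Rightarrow> ('a \<Rightarrow>\<^sub>L real) set" where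
  "subdiff f x = eps_subdiff 0 f x"

definition repr_class :: "('a::real_normed_vector \<Rightarrow> ('a \<Rightarrow>\<^sub>L real) set)
    \<Rightarrow> ('a \<times> ('a \<Rightarrow>\<^sub>L real) \<Rightarrow> ereal) set" where
  "repr_class T = {h. lsc_fun h \<and> convex_fun h \<and> no_minf h \<and>
      (\<forall>x xs. h (x, xs) \<ge> ereal (blinfun_apply xs x)) \<and>
      (\<forall>x xs. xs \<in> T x \<longrightarrow> h (x, xs) = ereal (blinfun_apply xs x))}"

(* eta-subdifferential of h : X \<times> X* \<rightarrow> \<real> \<union> {+\<infinity>}, with values in X* \<times> X,
 using the pairing <(w,ws),(ys,y)> = ys(w) + ws(y) *)
definition eps_subdiff_h :: "real \<Rightarrow> ('a::real_normed_vector \<times> ('a \<Rightarrow>\<^sub>L real) \<Rightarrow> ereal)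
    \<Rightarrow> 'a \<times> ('a \<Rightarrow>\<^sub>L real) \<Rightarrow> (('a \<Rightarrow>\<^sub>L real) \<times> 'a) set" where
  "eps_subdiff_h \<eta> h z = (if h z < \<infinity> then
     {(ys, y). \<forall>w ws. h (w, ws) \<ge> h z
        + ereal (blinfun_apply ys (w - fst z) + blinfun_apply (ws - snd z) y) - ereal \<eta>}
     else {})"

definition T_breve :: "('a::real_normed_vector \<times> ('a \<Rightarrow>\<^sub>L real) \<Rightarrow> ereal)
    \<Rightarrow> real \<Rightarrow> 'a \<Rightarrow> ('a \<Rightarrow>\<^sub>L real) set" where
  "T_breve h \<epsilon> x = {xs. (xs, x) \<in> eps_subdiff_h (2 * \<epsilon>) h (x, xs)}"

end

theory Submission
  imports Defs "HOL-Analysis.Analysis"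
begin

definition sublin :: "('a::real_vector \<Rightarrow> real) \<Rightarrow> bool" where
  "sublin p \<longleftrightarrow> (\<forall>x y. p (x+y) \<le> p x + p y) \<and> (\<forall>s x. s > 0 \<longrightarrow> p (s *\<^sub>R x) = s * p x)"

definition lsub :: "('a::real_vector \<times> real) set \<Rightarrow> bool" where
  "lsub G \<longleftrightarrow> (0,0) \<in> G \<and> (\<forall>x a y b. (x,a)\<in>G \<longrightarrow> (y,b)\<in>G \<longrightarrow> (x+y,a+b)\<in>G)
     \<and> (\<forall>x a c. (x,a)\<in>G \<longrightarrow> (c *\<^sub>R x, c*a)\<in>G)"

lemma sublin0: "sublin p \<Longrightarrow> p 0 = 0"
proof -
  assume "sublin p"
  hence h: "\<forall>s>0. \<forall>x. p (s *\<^sub>R x) = s * p x" unfolding sublin_def by blast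
  from h[rule_format, of 2 0] show "p 0 = 0" by simp
qed

lemma HB_step:
  assumes p: "sublin p" and G: "lsub G" and dom: "\<forall>x a. (x,a)\<in>G \<longrightarrow> a \<le> p x"
    and y: "\<forall>a. (y,a) \<notin> G"
  shows "\<exists>G'. lsub G' \<and> (\<forall>x a. (x,a)\<in>G' \<longrightarrow> a \<le> p x) \<and> G \<subseteq> G' \<and> G' \<noteq> G"
proof -
  have sub: "p (x+z) \<le> p x + p z" for x z using p unfolding sublin_def by blast
  have hom: "p (s *\<^sub>R x) = s * p x" if "s > 0" for s x using p that unfolding sublin_def by blast
  define L where "L = {a - p (x - y) | x a. (x,a) \<in> G}"
  define c where "c = Sup L"
  have Lne: "L \<noteq> {}" using G unfolding L_def lsub_def by blast
  have Lub: "l \<le> p (x' + y) - a'" if "l \<in> L" "(x',a') \<in> G" for l x' a'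
  proof -
    obtain x a where l: "l = a - p (x - y)" "(x,a)\<in>G" using \<open>l\<in>L\<close> unfolding L_def by blast
    have "(x+x', a+a') \<in> G" using G l(2) that(2) unfolding lsub_def by blast
    hence "a + a' \<le> p (x + x')" using dom by blast
    also have "\<dots> \<le> p (x - y) + p (x' + y)" using sub[of "x-y" "x'+y"] by simp
    finally show ?thesis using l by simp
  qed
  have bdd: "bdd_above L" using Lub G unfolding lsub_def bdd_above_def by blast
  have c1: "a - p (x - y) \<le> c" if "(x,a)\<in>G" for x a
    unfolding c_def by (rule cSup_upper[OF _ bdd]) (use that in \<open>auto simp: L_def\<close>)
  have c2: "c \<le> p (x + y) - a" if "(x,a)\<in>G" for x a
    unfolding c_def by (rule cSup_least[OF Lne]) (use Lub that in auto)
  define G' where "G' = {(x + t *\<^sub>R y, a + t * c) | x a t. (x,a) \<in> G}"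
  have "lsub G'"
    unfolding lsub_def
  proof (intro conjI allI impI)
    show "(0,0) \<in> G'" unfolding G'_def using G unfolding lsub_def by force
  next
    fix x a z b assume "(x,a)\<in>G'" "(z,b)\<in>G'"
    then obtain x1 a1 t1 x2 a2 t2 where e: "x = x1 + t1 *\<^sub>R y" "a = a1 + t1 * c" "(x1,a1)\<in>G"
      "z = x2 + t2 *\<^sub>R y" "b = a2 + t2 * c" "(x2,a2)\<in>G" unfolding G'_def by blast
    have "(x1+x2, a1+a2) \<in> G" using G e unfolding lsub_def by blast
    moreover have "x + z = (x1+x2) + (t1+t2) *\<^sub>R y" "a + b = (a1+a2) + (t1+t2)*c"
      using e by (auto simp: algebra_simps)
    ultimately show "(x+z, a+b) \<in> G'" unfolding G'_def by blast
  next
    fix x a s assume "(x,a)\<in>G'"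
    then obtain x1 a1 t1 where e: "x = x1 + t1 *\<^sub>R y" "a = a1 + t1 * c" "(x1,a1)\<in>G"
      unfolding G'_def by blast
    have "(s *\<^sub>R x1, s*a1) \<in> G" using G e unfolding lsub_def by blast
    moreover have "s *\<^sub>R x = s *\<^sub>R x1 + (s*t1) *\<^sub>R y" "s * a = s*a1 + (s*t1)*c"
      using e by (auto simp: algebra_simps)
    ultimately show "(s *\<^sub>R x, s*a) \<in> G'" unfolding G'_def by blast
  qed
  moreover have "a \<le> p x" if xa: "(x,a)\<in>G'" for x a
  proof -
    obtain x1 a1 t where e: "x = x1 + t *\<^sub>R y" "a = a1 + t * c" "(x1,a1)\<in>G"
      using xa unfolding G'_def by blast
    consider "t = 0" | "t > 0" | "t < 0" by linarith
    thus ?thesis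
    proof cases
      case 1 thus ?thesis using e dom by auto
    next
      case 2
      have "((1/t) *\<^sub>R x1, (1/t)*a1) \<in> G" using G e unfolding lsub_def by blast
      hence "c \<le> p ((1/t) *\<^sub>R x1 + y) - (1/t)*a1" using c2 by blast
      hence "t * c \<le> t * (p ((1/t) *\<^sub>R x1 + y) - (1/t)*a1)" using 2 by (simp add: mult_left_mono)
      hence "t * c \<le> t * p ((1/t) *\<^sub>R x1 + y) - a1" using 2 by (simp add: right_diff_distrib)
      also have "t * p ((1/t) *\<^sub>R x1 + y) = p (t *\<^sub>R ((1/t) *\<^sub>R x1 + y))" using hom 2 by simp
      also have "t *\<^sub>R ((1/t) *\<^sub>R x1 + y) = x" using 2 e by (simp add: scaleR_add_right)
      finally show ?thesis using e by simp
    next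
      case 3
      define u where "u = -t"
      have u: "u > 0" using 3 u_def by simp
      have "((1/u) *\<^sub>R x1, (1/u)*a1) \<in> G" using G e unfolding lsub_def by blast
      hence "(1/u)*a1 - p ((1/u) *\<^sub>R x1 - y) \<le> c" using c1 by blast
      hence "u * ((1/u)*a1 - p ((1/u) *\<^sub>R x1 - y)) \<le> u * c" using u by (simp add: mult_left_mono)
      hence "a1 - u * p ((1/u) *\<^sub>R x1 - y) \<le> u * c" using u by (simp add: right_diff_distrib)
      also have "u * p ((1/u) *\<^sub>R x1 - y) = p (u *\<^sub>R ((1/u) *\<^sub>R x1 - y))" using hom u by simp
      also have "u *\<^sub>R ((1/u) *\<^sub>R x1 - y) = x" using u e u_def by (simp add: scaleR_diff_right)
      finally show ?thesis using e u_def by simp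
    qed
  qed
  moreover have "G \<subseteq> G'" unfolding G'_def by force
  moreover have "(y, c) \<in> G'" unfolding G'_def using G unfolding lsub_def by force
  ultimately show ?thesis using y by blast
qed

lemma HB:
  fixes p :: "'a::real_vector \<Rightarrow> real"
  assumes p: "sublin p"
  shows "\<exists>g. linear g \<and> (\<forall>x. g x \<le> p x)"
proof -
  define A where "A = {G::('a\<times>real) set. lsub G \<and> (\<forall>x a. (x,a)\<in>G \<longrightarrow> a \<le> p x)}"
  have p0: "p 0 = 0" using sublin0[OF p] .
  have "\<forall>C\<in>chains A. \<exists>U\<in>A. \<forall>X\<in>C. X \<subseteq> U"
  proof
    fix C assume C: "C \<in> chains A"
    show "\<exists>U\<in>A. \<forall>X\<in>C. X \<subseteq> U"
    proof (cases "C = {}")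
      case True
      have "{(0,0)} \<in> A" unfolding A_def lsub_def using p0 by auto
      thus ?thesis using True by blast
    next
      case False
      have CA: "C \<subseteq> A" and ch: "\<forall>X\<in>C. \<forall>Y\<in>C. X \<subseteq> Y \<or> Y \<subseteq> X"
        using C unfolding chains_def chain_subset_def by auto
      have "\<Union>C \<in> A" unfolding A_def lsub_def
      proof (intro CollectI conjI allI impI)
        show "(0,0) \<in> \<Union>C" using False CA unfolding A_def lsub_def by blast
      next
        fix x a y b assume "(x,a) \<in> \<Union>C" "(y,b) \<in> \<Union>C"
        then obtain X Y where "X\<in>C" "Y\<in>C" "(x,a)\<in>X" "(y,b)\<in>Y" by blast
        then obtain Z where "Z \<in> C" "(x,a)\<in>Z" "(y,b)\<in>Z" using ch by blast
        thus "(x+y,a+b) \<in> \<Union>C" using CA unfolding A_def lsub_def by blast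
      next
        fix x a c assume "(x,a) \<in> \<Union>C"
        thus "(c *\<^sub>R x, c*a) \<in> \<Union>C" using CA unfolding A_def lsub_def by blast
      next
        fix x a assume "(x,a) \<in> \<Union>C"
        thus "a \<le> p x" using CA unfolding A_def by blast
      qed
      thus ?thesis by blast
    qed
  qed
  then obtain M where M: "M \<in> A" and max: "\<forall>X\<in>A. M \<subseteq> X \<longrightarrow> X = M"
    using Zorn_Lemma2[of A] by blast
  have Ml: "lsub M" and Md: "\<forall>x a. (x,a)\<in>M \<longrightarrow> a \<le> p x" using M unfolding A_def by auto
  have tot: "\<exists>a. (y,a) \<in> M" for y
  proof (rule ccontr)
    assume "\<not> ?thesis"
    then obtain G' where "lsub G'" "\<forall>x a. (x,a)\<in>G' \<longrightarrow> a \<le> p x" "M \<subseteq> G'" "G' \<noteq> M"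
      using HB_step[OF p Ml Md] by blast
    thus False using max unfolding A_def by blast
  qed
  have uniq: "a = b" if "(x,a)\<in>M" "(x,b)\<in>M" for x a b
  proof -
    have "((-1) *\<^sub>R x, (-1)*b) \<in> M" using Ml that unfolding lsub_def by blast
    hence d: "(0, a - b) \<in> M" using Ml that unfolding lsub_def by fastforce
    hence "((-1) *\<^sub>R 0, (-1)*(a - b)) \<in> M" using Ml unfolding lsub_def by blast
    hence "b - a \<le> 0" using Md p0 by fastforce
    moreover have "a - b \<le> 0" using d Md p0 by fastforce
    ultimately show ?thesis by simp
  qed
  define g where "g x = (SOME a. (x,a) \<in> M)" for x
  have gM: "(x, g x) \<in> M" for x unfolding g_def using tot by (metis someI_ex)
  have "linear g"
  proof (rule linearI)
    fix x y show "g (x+y) = g x + g y"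
      using uniq gM Ml unfolding lsub_def by blast
  next
    fix c x show "g (c *\<^sub>R x) = c *\<^sub>R g x"
      using uniq gM Ml unfolding lsub_def by simp blast
  qed
  moreover have "g x \<le> p x" for x using gM Md by blast
  ultimately show ?thesis by blast
qed


lemma sep:
  fixes C :: "'b::real_normed_vector set"
  assumes cv: "convex C" and d: "\<delta> > 0" and far: "\<forall>c\<in>C. \<delta> \<le> norm (c - z0)"
  shows "\<exists>g. linear g \<and> (\<forall>v. \<bar>g v\<bar> \<le> norm v) \<and> (\<forall>c\<in>C. g c \<le> g z0 - \<delta>)"
proof (cases "C = {}")
  case True
  have "linear (\<lambda>v::'b. 0::real)" by (simp add: linear_zero)
  thus ?thesis using True by force
next
  case False
  then obtain c0 where c0: "c0 \<in> C" by blast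
  define S where "S v = {norm (v - t *\<^sub>R (c - z0)) - \<delta>*t | t c. t \<ge> 0 \<and> c \<in> C}" for v
  define q where "q v = Inf (S v)" for v
  have Sne: "S v \<noteq> {}" for v unfolding S_def using c0 by blast
  have Slb: "- norm v \<le> a" if aS: "a \<in> S v" for a v
  proof -
    obtain t c where e: "a = norm (v - t *\<^sub>R (c - z0)) - \<delta>*t" "t \<ge> 0" "c \<in> C"
      using aS unfolding S_def by blast
    have "t * \<delta> \<le> t * norm (c - z0)" using e far by (simp add: mult_left_mono)
    also have "\<dots> = norm (t *\<^sub>R (c - z0))" using e by simp
    also have "\<dots> \<le> norm (v - t *\<^sub>R (c - z0)) + norm v" by (metis norm_minus_commute norm_triangle_sub add.commute)
    finally show ?thesis using e by (simp add: algebra_simps)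
  qed
  have bdd: "bdd_below (S v)" for v using Slb unfolding bdd_below_def by blast
  have qle: "q v \<le> a" if "a \<in> S v" for a v unfolding q_def by (rule cInf_lower[OF that bdd])
  have qge: "b \<le> q v" if "\<And>a. a \<in> S v \<Longrightarrow> b \<le> a" for b v
    unfolding q_def by (rule cInf_greatest[OF Sne]) (use that in auto)
  have qnorm: "q v \<le> norm v" for v
    by (rule qle) (use c0 in \<open>force simp: S_def\<close>)
  have qC: "q (c - z0) \<le> - \<delta>" if "c \<in> C" for c
  proof -
    have "norm ((c - z0) - 1 *\<^sub>R (c - z0)) - \<delta>*1 \<in> S (c - z0)" unfolding S_def mem_Collect_eq using that by (intro exI[of _ 1] exI[of _ c]) simp
    thus ?thesis using qle by fastforce
  qed
  have addel: "q (v + w) \<le> a + b" if ab: "a \<in> S v" "b \<in> S w" for a b v w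
  proof -
    obtain t1 c1 where e1: "a = norm (v - t1 *\<^sub>R (c1 - z0)) - \<delta>*t1" "t1 \<ge> 0" "c1 \<in> C"
      using ab unfolding S_def by blast
    obtain t2 c2 where e2: "b = norm (w - t2 *\<^sub>R (c2 - z0)) - \<delta>*t2" "t2 \<ge> 0" "c2 \<in> C"
      using ab unfolding S_def by blast
    show ?thesis
    proof (cases "t1 + t2 = 0")
      case True
      hence "t1 = 0" "t2 = 0" using e1 e2 by auto
      hence "a + b = norm v + norm w" using e1 e2 by simp
      thus ?thesis using qnorm[of "v+w"] norm_triangle_ineq[of v w] by linarith
    next
      case False
      define T where "T = t1 + t2"
      have T: "T > 0" using False e1 e2 T_def by auto
      define c' where "c' = (t1/T) *\<^sub>R c1 + (t2/T) *\<^sub>R c2"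
      have "c' \<in> C" unfolding c'_def
        by (rule convexD[OF cv e1(3) e2(3)]) (use e1 e2 T T_def in \<open>auto simp: add_divide_distrib[symmetric]\<close>)
      have "T *\<^sub>R c' = t1 *\<^sub>R c1 + t2 *\<^sub>R c2"
        using T unfolding c'_def by (simp add: scaleR_add_right)
      hence eq: "T *\<^sub>R (c' - z0) = t1 *\<^sub>R (c1 - z0) + t2 *\<^sub>R (c2 - z0)"
        unfolding T_def by (simp add: algebra_simps)
      have "norm ((v + w) - T *\<^sub>R (c' - z0)) - \<delta>*T \<in> S (v+w)"
        unfolding S_def using \<open>c' \<in> C\<close> T by force
      hence "q (v+w) \<le> norm ((v + w) - T *\<^sub>R (c' - z0)) - \<delta>*T" by (rule qle)
      also have "(v + w) - T *\<^sub>R (c' - z0) = (v - t1 *\<^sub>R (c1 - z0)) + (w - t2 *\<^sub>R (c2 - z0))"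
        using eq by (simp add: algebra_simps)
      finally show ?thesis using e1 e2 T_def norm_triangle_ineq[of "v - t1 *\<^sub>R (c1 - z0)" "w - t2 *\<^sub>R (c2 - z0)"]
        by (simp add: algebra_simps)
    qed
  qed
  have qadd: "q (v + w) \<le> q v + q w" for v w
  proof -
    have "q (v + w) - q v \<le> b" if "b \<in> S w" for b
    proof -
      have "q (v+w) - b \<le> q v" by (rule qge) (use addel that in force)
      thus ?thesis by simp
    qed
    hence "q (v + w) - q v \<le> q w" by (rule qge)
    thus ?thesis by simp
  qed
  have qsc: "q (s *\<^sub>R v) \<le> s * q v" if s: "s > 0" for s v
  proof -
    have "q (s *\<^sub>R v) / s \<le> a" if aS: "a \<in> S v" for a
    proof -
      obtain t c where e: "a = norm (v - t *\<^sub>R (c - z0)) - \<delta>*t" "t \<ge> 0" "c \<in> C"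
        using aS unfolding S_def by blast
      have "norm (s *\<^sub>R v - (s*t) *\<^sub>R (c - z0)) - \<delta>*(s*t) \<in> S (s *\<^sub>R v)"
        unfolding S_def using e s by force
      hence "q (s *\<^sub>R v) \<le> norm (s *\<^sub>R v - (s*t) *\<^sub>R (c - z0)) - \<delta>*(s*t)" by (rule qle)
      also have "s *\<^sub>R v - (s*t) *\<^sub>R (c - z0) = s *\<^sub>R (v - t *\<^sub>R (c - z0))" by (simp add: algebra_simps)
      also have "norm \<dots> - \<delta>*(s*t) = s * a" by (simp only: norm_scaleR) (simp add: e(1) abs_of_pos[OF s] right_diff_distrib)
      finally show ?thesis using s by (simp add: divide_simps mult.commute)
    qed
    hence "q (s *\<^sub>R v) / s \<le> q v" by (rule qge)
    thus ?thesis using s by (simp add: divide_simps mult.commute)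
  qed
  have "sublin q" unfolding sublin_def
  proof (intro conjI allI impI)
    fix x y show "q (x + y) \<le> q x + q y" by (rule qadd)
  next
    fix s x assume s: "(s::real) > 0"
    have "q x = q ((1/s) *\<^sub>R (s *\<^sub>R x))" using s by simp
    also have "\<dots> \<le> (1/s) * q (s *\<^sub>R x)" using s by (intro qsc) simp
    finally have "s * q x \<le> q (s *\<^sub>R x)" using s by (simp add: divide_simps mult.commute)
    thus "q (s *\<^sub>R x) = s * q x" using qsc[OF s, of x] by linarith
  qed
  then obtain g where g: "linear g" "\<forall>x. g x \<le> q x" using HB by blast
  have "\<bar>g v\<bar> \<le> norm v" for v
  proof -
    have "g v \<le> norm v" using g qnorm order_trans by blast
    moreover have "g (-v) \<le> norm (-v)" using g qnorm order_trans by blast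
    hence "- g v \<le> norm v" using linear_neg[OF g(1)] by simp
    ultimately show ?thesis by linarith
  qed
  moreover have "g c \<le> g z0 - \<delta>" if "c \<in> C" for c
    using g(2)[rule_format, of "c - z0"] qC[OF that] linear_diff[OF g(1)] by simp
  ultimately show ?thesis using g by blast
qed


lemma epi_closed:
  fixes f :: "'a::real_normed_vector \<Rightarrow> ereal"
  assumes "lsc_fun f"
  shows "closed {(y, s::real). f y \<le> ereal s}"
proof -
  have "- {(y, s::real). f y \<le> ereal s} = (\<Union>s'::real. (- {y. f y \<le> ereal s'}) \<times> {..<s'})"
  proof (rule set_eqI, rule iffI)
    fix z :: "'a \<times> real" assume "z \<in> - {(y, s::real). f y \<le> ereal s}"
    then obtain y s where z: "z = (y,s)" "ereal s < f y" by (cases z) auto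
    then obtain s' where "ereal s < ereal s'" "ereal s' < f y"
      by (meson ereal_dense2 less_ereal.simps(1) ereal_less_ereal_Ex)
    hence "\<not> f y \<le> ereal s'" "s < s'" by auto
    thus "z \<in> (\<Union>s'::real. (- {y. f y \<le> ereal s'}) \<times> {..<s'})" using z by blast
  next
    fix z :: "'a \<times> real" assume "z \<in> (\<Union>s'::real. (- {y. f y \<le> ereal s'}) \<times> {..<s'})"
    then obtain s' where "z \<in> (- {y. f y \<le> ereal s'}) \<times> {..<s'}" by blast
    then obtain y s where "z = (y,s)" "ereal s' < f y" "s < s'" by (cases z) (auto simp: not_le)
    moreover hence "ereal s < f y" by (metis less_ereal.simps(1) order.strict_trans)
    ultimately show "z \<in> - {(y, s::real). f y \<le> ereal s}" by auto
  qed
  moreover have "open (\<Union>s'::real. (- {y. f y \<le> ereal s'}) \<times> {..<s'})"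
    using assms unfolding lsc_fun_def by (intro open_UN ballI open_Times) auto
  ultimately show ?thesis by (metis open_Compl double_complement closed_def)
qed

lemma epi_convex:
  fixes f :: "'a::real_normed_vector \<Rightarrow> ereal"
  assumes "convex_fun f" "no_minf f"
  shows "convex {(y, s::real). f y \<le> ereal s}"
proof (rule convexI)
  fix z1 z2 :: "'a \<times> real" and u v :: real
  assume z: "z1 \<in> {(y, s). f y \<le> ereal s}" "z2 \<in> {(y, s). f y \<le> ereal s}" "0 \<le> u" "0 \<le> v" "u + v = 1"
  obtain y1 s1 y2 s2 where e: "z1 = (y1,s1)" "z2 = (y2,s2)" "f y1 \<le> ereal s1" "f y2 \<le> ereal s2"
    using z by (cases z1, cases z2) auto
  consider "u = 0" | "v = 0" | "0 < u \<and> u < 1" using z by linarith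
  thus "u *\<^sub>R z1 + v *\<^sub>R z2 \<in> {(y, s). f y \<le> ereal s}"
  proof cases
    case 1 thus ?thesis using e z by auto
  next
    case 2 thus ?thesis using e z by auto
  next
    case 3
    have v: "v = 1 - u" using z by simp
    have "f (u *\<^sub>R y1 + (1-u) *\<^sub>R y2) \<le> ereal u * f y1 + ereal (1 - u) * f y2"
      using assms(1) 3 unfolding convex_fun_def by blast
    also have "\<dots> \<le> ereal u * ereal s1 + ereal (1-u) * ereal s2"
      using 3 e by (intro add_mono ereal_mult_left_mono) auto
    finally show ?thesis using e v by simp
  qed
qed

lemma epi_sep:
  fixes f :: "'a::real_normed_vector \<Rightarrow> ereal"
  assumes lsc: "lsc_fun f" and cf: "convex_fun f" and nm: "no_minf f"
    and r: "ereal r < f x0" and dom: "f y1 < \<infinity>"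
  shows "\<exists>\<phi> lam \<delta>. bounded_linear \<phi> \<and> lam \<le> 0 \<and> \<delta> > 0 \<and>
     (\<forall>y s. f y \<le> ereal s \<longrightarrow> \<phi> y + lam * s \<le> \<phi> x0 + lam * r - \<delta>)"
proof -
  define C where "C = {(y, s::real). f y \<le> ereal s}"
  have cl: "closed C" unfolding C_def by (rule epi_closed[OF lsc])
  have cv: "convex C" unfolding C_def by (rule epi_convex[OF cf nm])
  have z0: "(x0, r) \<notin> C" using r unfolding C_def by auto
  obtain e where e: "e > 0" "ball (x0,r) e \<subseteq> - C"
    using cl z0 unfolding closed_def open_contains_ball by blast
  have far: "\<forall>c\<in>C. e \<le> norm (c - (x0,r))"
  proof
    fix c assume "c \<in> C"
    hence "c \<notin> ball (x0,r) e" using e by blast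
    thus "e \<le> norm (c - (x0,r))" by (simp add: dist_norm norm_minus_commute)
  qed
  obtain g where g: "linear g" "\<forall>v. \<bar>g v\<bar> \<le> norm v" "\<forall>c\<in>C. g c \<le> g (x0,r) - e"
    using sep[OF cv e(1) far] by blast
  define \<phi> where "\<phi> y = g (y, 0)" for y
  define lam where "lam = g (0, 1)"
  have dec: "g (y, s) = \<phi> y + lam * s" for y s
  proof -
    have "(y, s) = (y, 0) + s *\<^sub>R (0, 1)" by simp
    hence "g (y, s) = g (y,0) + s * g (0,1)"
      by (metis linear_add[OF g(1)] linear_scale[OF g(1)] real_scaleR_def)
    thus ?thesis unfolding \<phi>_def lam_def by simp
  qed
  have bl: "bounded_linear \<phi>"
  proof (rule bounded_linear_intro[where K=1])
    fix x y show "\<phi> (x + y) = \<phi> x + \<phi> y" unfolding \<phi>_def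
      using linear_add[OF g(1), of "(x,0)" "(y,0)"] by simp
  next
    fix c x show "\<phi> (c *\<^sub>R x) = c *\<^sub>R \<phi> x" unfolding \<phi>_def
      using linear_scale[OF g(1), of c "(x,0)"] by simp
  next
    fix x show "norm (\<phi> x) \<le> norm x * 1" unfolding \<phi>_def using g(2)[rule_format, of "(x,0)"]
      by (simp add: norm_Pair)
  qed
  have ineq: "\<phi> y + lam * s \<le> \<phi> x0 + lam * r - e" if "f y \<le> ereal s" for y s
    using g(3) that dec unfolding C_def by force
  obtain s1 where s1: "f y1 \<le> ereal s1" using dom nm unfolding no_minf_def
    by (cases "f y1") auto
  have "lam \<le> 0"
  proof (rule ccontr)
    assume "\<not> lam \<le> 0"
    hence l: "lam > 0" by simp
    define s where "s = max s1 ((\<phi> x0 + lam * r - e - \<phi> y1) / lam + 1)"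
    have "f y1 \<le> ereal s" using s1 unfolding s_def by (meson ereal_less_eq(3) max.cobounded1 order_trans)
    hence "\<phi> y1 + lam * s \<le> \<phi> x0 + lam * r - e" by (rule ineq)
    moreover have "lam * ((\<phi> x0 + lam * r - e - \<phi> y1) / lam + 1) \<le> lam * s"
      unfolding s_def using l by (intro mult_left_mono) auto
    hence "\<phi> x0 + lam * r - e - \<phi> y1 + lam \<le> lam * s" using l by (simp add: distrib_left)
    ultimately show False using l by linarith
  qed
  thus ?thesis using bl e(1) ineq by blast
qed

lemma minorant_neg:
  fixes f :: "'a::real_normed_vector \<Rightarrow> ereal"
  assumes bl: "bounded_linear \<phi>" and l: "lam < 0" and d: "\<delta> > 0" and nm: "no_minf f"
    and ineq: "\<forall>y s. f y \<le> ereal s \<longrightarrow> \<phi> y + lam * s \<le> \<phi> x0 + lam * r - \<delta>"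
  shows "\<exists>ws::'a \<Rightarrow>\<^sub>L real. \<exists>\<beta>. (\<forall>y. ereal (blinfun_apply ws y - \<beta>) \<le> f y) \<and> r < blinfun_apply ws x0 - \<beta>"
proof -
  define ws where "ws = Blinfun (\<lambda>y. \<phi> y / (-lam))"
  have bl2: "bounded_linear (\<lambda>y. \<phi> y / (-lam))" using bounded_linear_compose[OF bounded_linear_divide[of "-lam"] bl] by (simp add: o_def)
  have wsa: "blinfun_apply ws y = \<phi> y / (-lam)" for y
    unfolding ws_def bounded_linear_Blinfun_apply[OF bl2] ..
  define \<beta> where "\<beta> = (\<phi> x0 - \<delta>) / (-lam) - r"
  have "ereal (blinfun_apply ws y - \<beta>) \<le> f y" for y
  proof (cases "f y")
    case (real s)
    hence "\<phi> y + lam * s \<le> \<phi> x0 + lam * r - \<delta>" using ineq by simp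
    hence "\<phi> y / (-lam) - ((\<phi> x0 - \<delta>) / (-lam) - r) \<le> s" using l
      by (simp add: field_simps)
    thus ?thesis using real wsa \<beta>_def by simp
  next
    case PInf thus ?thesis by simp
  next
    case MInf thus ?thesis using nm unfolding no_minf_def by simp
  qed
  moreover have "r < blinfun_apply ws x0 - \<beta>" unfolding wsa \<beta>_def using l d
    by (simp add: field_simps)
  ultimately show ?thesis by blast
qed

lemma minorant:
  fixes f :: "'a::real_normed_vector \<Rightarrow> ereal"
  assumes lsc: "lsc_fun f" and cf: "convex_fun f" and pr: "proper_fun f"
    and r: "ereal r < f x0"
  shows "\<exists>ws::'a \<Rightarrow>\<^sub>L real. \<exists>\<beta>. (\<forall>y. ereal (blinfun_apply ws y - \<beta>) \<le> f y) \<and> r < blinfun_apply ws x0 - \<beta>"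
proof -
  have nm: "no_minf f" using pr unfolding proper_fun_def by blast
  obtain y1 where y1: "f y1 < \<infinity>" using pr unfolding proper_fun_def by blast
  obtain \<phi> lam \<delta> where S: "bounded_linear \<phi>" "lam \<le> 0" "\<delta> > 0"
    "\<forall>y s. f y \<le> ereal s \<longrightarrow> \<phi> y + lam * s \<le> \<phi> x0 + lam * r - \<delta>"
    using epi_sep[OF lsc cf nm r y1] by blast
  show ?thesis
  proof (cases "lam < 0")
    case True thus ?thesis using minorant_neg[OF S(1) True S(3) nm S(4)] by blast
  next
    case False
    hence l0: "lam = 0" using S(2) by simp
    obtain s1 where s1: "f y1 = ereal s1" using y1 nm unfolding no_minf_def by (cases "f y1") auto
    have r1: "ereal (s1 - 1) < f y1" using s1 by simp
    obtain \<phi>1 lam1 \<delta>1 where S1: "bounded_linear \<phi>1" "lam1 \<le> 0" "\<delta>1 > 0"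
      "\<forall>y s. f y \<le> ereal s \<longrightarrow> \<phi>1 y + lam1 * s \<le> \<phi>1 y1 + lam1 * (s1 - 1) - \<delta>1"
      using epi_sep[OF lsc cf nm r1 y1] by blast
    have "lam1 \<noteq> 0"
    proof
      assume "lam1 = 0"
      thus False using S1(3) S1(4)[rule_format, of y1 s1] s1 by simp
    qed
    hence "lam1 < 0" using S1(2) by simp
    then obtain ws1 :: "'a \<Rightarrow>\<^sub>L real" and \<beta>1 where M1: "\<forall>y. ereal (blinfun_apply ws1 y - \<beta>1) \<le> f y"
      using minorant_neg[OF S1(1) _ S1(3) nm S1(4)] by blast
    have vert: "\<phi> y \<le> \<phi> x0 - \<delta>" if fy: "f y < \<infinity>" for y
    proof -
      obtain s where "f y = ereal s" using fy nm unfolding no_minf_def by (cases "f y") auto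
      thus ?thesis using S(4) l0 by force
    qed
    define \<mu> where "\<mu> = max 0 ((r - (blinfun_apply ws1 x0 - \<beta>1)) / \<delta> + 1)"
    have mu: "\<mu> \<ge> 0" "\<mu> * \<delta> \<ge> r - (blinfun_apply ws1 x0 - \<beta>1) + \<delta>"
      unfolding \<mu>_def using S(3) by (auto simp: field_simps max_def)
    define ws where "ws = ws1 + \<mu> *\<^sub>R Blinfun \<phi>"
    have wsa: "blinfun_apply ws y = blinfun_apply ws1 y + \<mu> * \<phi> y" for y
      unfolding ws_def using bounded_linear_Blinfun_apply[OF S(1)] by (simp add: blinfun.add_left blinfun.scaleR_left)
    define \<beta> where "\<beta> = \<beta>1 + \<mu> * (\<phi> x0 - \<delta>)"
    have "ereal (blinfun_apply ws y - \<beta>) \<le> f y" for y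
    proof (cases "f y < \<infinity>")
      case True
      have "\<mu> * \<phi> y \<le> \<mu> * (\<phi> x0 - \<delta>)" using vert[OF True] mu(1) by (rule mult_left_mono)
      hence "blinfun_apply ws y - \<beta> \<le> blinfun_apply ws1 y - \<beta>1" unfolding wsa \<beta>_def by simp
      thus ?thesis using M1 order_trans ereal_less_eq(3) by blast
    next
      case False thus ?thesis by simp
    qed
    moreover have "r < blinfun_apply ws x0 - \<beta>" unfolding wsa \<beta>_def using mu S(3)
      by (simp add: algebra_simps)
    ultimately show ?thesis by blast
  qed
qed


theorem theorem4p1:
  fixes f :: "'a::banach \<Rightarrow> ereal"
    and h :: "'a \<times> ('a \<Rightarrow>\<^sub>L real) \<Rightarrow> ereal"
  assumes "reflexive_space TYPE('a)"
    and "lsc_fun f" and "proper_fun f" and "convex_fun f"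
    and "h \<in> repr_class (subdiff f)"
    and "\<forall>z. h z \<le> FY f z"
  shows "\<forall>\<epsilon>>0. \<forall>x. T_breve h (\<epsilon> / 2) x \<subseteq> eps_subdiff \<epsilon> f x"
proof (intro allI impI subsetI)
  fix \<epsilon> :: real and x xs
  assume ep: "\<epsilon> > 0" and xsT: "xs \<in> T_breve h (\<epsilon> / 2) x"
  have nm: "no_minf f" using assms(3) unfolding proper_fun_def by blast
  have hge: "h (w, ws) \<ge> ereal (blinfun_apply ws w)" for w ws using assms(5) unfolding repr_class_def by blast
  have "(xs, x) \<in> eps_subdiff_h \<epsilon> h (x, xs)" using xsT unfolding T_breve_def by simp
  hence hfin: "h (x,xs) < \<infinity>" and H: "\<forall>w ws. h (w, ws) \<ge> h (x,xs)
        + ereal (blinfun_apply xs (w - x) + blinfun_apply (ws - xs) x) - ereal \<epsilon>"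
    unfolding eps_subdiff_h_def by (auto split: if_splits)
  obtain e where e: "h (x,xs) = ereal e" using hfin hge[where w=x and ws=xs] by (cases "h (x,xs)") auto
  have ee: "blinfun_apply xs x \<le> e" using hge[where w=x and ws=xs] e by simp
  have K: "f x \<le> f w + ereal (\<epsilon> - blinfun_apply xs (w - x))" for w
  proof (rule ccontr)
    assume "\<not> ?thesis"
    hence lt: "f w + ereal (\<epsilon> - blinfun_apply xs (w - x)) < f x" by simp
    then obtain a where a: "f w = ereal a" using nm unfolding no_minf_def by (cases "f w") auto
    define r where "r = a + (\<epsilon> - blinfun_apply xs (w - x))"
    have "ereal r < f x" using lt a r_def by simp
    then obtain ws :: "'a \<Rightarrow>\<^sub>L real" and \<beta> where M: "\<forall>y. ereal (blinfun_apply ws y - \<beta>) \<le> f y"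
      and M2: "r < blinfun_apply ws x - \<beta>"
      using minorant[OF assms(2) assms(4) assms(3)] by blast
    have "conj_fun f ws \<le> ereal \<beta>" unfolding conj_fun_def
    proof (rule SUP_least)
      fix y
      show "ereal (blinfun_apply ws y) - f y \<le> ereal \<beta>"
      proof (cases "f y")
        case (real c) thus ?thesis using M[rule_format, of y] by simp
      next
        case PInf thus ?thesis by simp
      next
        case MInf thus ?thesis using nm unfolding no_minf_def by simp
      qed
    qed
    hence c1: "ereal a + conj_fun f ws \<le> ereal a + ereal \<beta>" by (rule add_left_mono)
    have "h (w, ws) \<le> ereal a + conj_fun f ws" using assms(6)[rule_format, of "(w,ws)"] a
      unfolding FY_def by simp
    hence "h (w, ws) \<le> ereal (a + \<beta>)" using c1 by simp
    moreover have "h (w, ws) \<ge> ereal (e + (blinfun_apply xs (w - x) + blinfun_apply (ws - xs) x) - \<epsilon>)"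
      using H e by simp
    ultimately have "e + (blinfun_apply xs (w - x) + blinfun_apply (ws - xs) x) - \<epsilon> \<le> a + \<beta>"
      by (metis ereal_less_eq(3) order_trans)
    hence "blinfun_apply ws x - \<beta> \<le> r" using ee unfolding r_def by (simp add: blinfun.diff_left)
    thus False using M2 by simp
  qed
  obtain w0 where w0: "f w0 < \<infinity>" using assms(3) unfolding proper_fun_def by blast
  obtain a0 where a0: "f w0 = ereal a0" using w0 nm unfolding no_minf_def by (cases "f w0") auto
  have "f x \<le> ereal (a0 + (\<epsilon> - blinfun_apply xs (w0 - x)))" using K[of w0] a0 by simp
  hence "f x < \<infinity>" using order_le_less_trans by fastforce
  then obtain b where b: "f x = ereal b" using nm unfolding no_minf_def by (cases "f x") auto
  have "f y - f x \<ge> ereal (blinfun_apply xs (y - x)) - ereal \<epsilon>" for y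
  proof (cases "f y")
    case (real c) thus ?thesis using K[of y] b by simp
  next
    case PInf thus ?thesis using b by simp
  next
    case MInf thus ?thesis using nm unfolding no_minf_def by simp
  qed
  thus "xs \<in> eps_subdiff \<epsilon> f x" unfolding eps_subdiff_def using b by simp
qed

end
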